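(* Under the standing assumptions in the context, with $h^E$, $h^S$ defined as there, let $$h^Q(r)=\frac{q_w}{r\sqrt{2\eta(r)}},\qquad L(r)=\frac{1}{3\nu(r)\left(\dfrac{2\eta(r)}{3g\,\nu(r)}-h^Q(r)\right)}.$$ Then $L(r)>0$ and $$h^S(r)-h^E(r)\ \ge\ L(r)\,\big(h^S(r)\big)^2\,\big(1-\nu(r)\big)\qquad\text{for all } r\in[r_0,r_1].$$
   Context: Standing assumptions and notation. Let $g>0$, $0<r_0<r_1$, and let $f\in C^1([r_0,r_1])$ with $f'(r)\le 0$ for all $r\in[r_0,r_1]$, $f'(r_0)=0$, and $f(r_0)>f(r_1)$. Set $\nu(r)=1/\sqrt{1+(f'(r))^2}$. Let $h_0>0$, $u_0>0$ with $u_0^2/(g h_0)>1$. Define $q_e=\tfrac12 u_0^2+g\,(f(r_0)+h_0)$, $q_w=r_0h_0u_0$, $\eta(r)=q_e-g f(r)$ (note $\eta(r)>0$ on $[r_0,r_1]$), and $$\mathcal P^S_r(h)=g h^3-\eta(r)h^2+\frac{q_w^2}{2r^2},\qquad \mathcal P^E_r(h)=g\,\nu(r)\, h^3-\eta(r)h^2+\frac{q_w^2}{2r^2}.$$ Let $\nu^S(r)=1$, $\nu^E(r)=\nu(r)$, $h^M_\star(r)=\dfrac{2\eta(r)}{3g\,\nu^M(r)}$ for $M\in\{E,S\}$. For each $r\in[r_0,r_1]$ and $M\in\{E,S\}$, $h^M(r)$ denotes the unique root of $\mathcal P^M_r$ in the interval $(0,h^M_\star(r))$ (this root exists and $h^M$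 is continuous with $h^M(r_0)=h_0$). *)

theory Defs
  imports "HOL-Analysis.Analysis"
begin

definition nu :: "(real \<Rightarrow> real) \<Rightarrow> real \<Rightarrow> real" where
  "nu f' r = 1 / sqrt (1 + (f' r)^2)"

definition qe :: "real \<Rightarrow> (real \<Rightarrow> real) \<Rightarrow> real \<Rightarrow> real \<Rightarrow> real \<Rightarrow> real" where
  "qe g f r0 h0 u0 = u0^2 / 2 + g * (f r0 + h0)"

definition qw :: "real \<Rightarrow> real \<Rightarrow> real \<Rightarrow> real" where
  "qw r0 h0 u0 = r0 * h0 * u0"

definition eta :: "real \<Rightarrow> (real \<Rightarrow> real) \<Rightarrow> real \<Rightarrow> real \<Rightarrow> real \<Rightarrow> real \<Rightarrow> real" where
  "eta g f r0 h0 u0 r = qe g f r0 h0 u0 - g * f r"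

text \<open>Generic cubic  g*nuM*h^3 - eta*h^2 + qw^2/(2 r^2); nuM = 1 gives P^S, nuM = nu gives P^E.\<close>
definition Pcubic :: "real \<Rightarrow> real \<Rightarrow> real \<Rightarrow> real \<Rightarrow> real \<Rightarrow> real \<Rightarrow> real" where
  "Pcubic g nuM et q r h = g * nuM * h^3 - et * h^2 + q^2 / (2 * r^2)"

definition hstar :: "real \<Rightarrow> real \<Rightarrow> real \<Rightarrow> real" where
  "hstar g nuM et = 2 * et / (3 * g * nuM)"

definition hroot :: "real \<Rightarrow> real \<Rightarrow> real \<Rightarrow> real \<Rightarrow> real \<Rightarrow> real" where
  "hroot g nuM et q r = (THE h. 0 < h \<and> h < hstar g nuM et \<and> Pcubic g nuM et q r h = 0)"

definition hS :: "real \<Rightarrow> (real \<Rightarrow> real) \<Rightarrow> real \<Rightarrow> real \<Rightarrow> real \<Rightarrow> real \<Rightarrow> real" where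
  "hS g f r0 h0 u0 r = hroot g 1 (eta g f r0 h0 u0 r) (qw r0 h0 u0) r"

definition hE :: "real \<Rightarrow> (real \<Rightarrow> real) \<Rightarrow> (real \<Rightarrow> real) \<Rightarrow> real \<Rightarrow> real \<Rightarrow> real \<Rightarrow> real \<Rightarrow> real" where
  "hE g f f' r0 h0 u0 r = hroot g (nu f' r) (eta g f r0 h0 u0 r) (qw r0 h0 u0) r"

definition hQ :: "real \<Rightarrow> (real \<Rightarrow> real) \<Rightarrow> real \<Rightarrow> real \<Rightarrow> real \<Rightarrow> real \<Rightarrow> real" where
  "hQ g f r0 h0 u0 r = qw r0 h0 u0 / (r * sqrt (2 * eta g f r0 h0 u0 r))"

definition Lc :: "real \<Rightarrow> (real \<Rightarrow> real) \<Rightarrow> (real \<Rightarrow> real) \<Rightarrow> real \<Rightarrow> real \<Rightarrow> real \<Rightarrow> real \<Rightarrow> real" where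
  "Lc g f f' r0 h0 u0 r =
     1 / (3 * nu f' r * (2 * eta g f r0 h0 u0 r / (3 * g * nu f' r) - hQ g f r0 h0 u0 r))"

end

theory Submission
  imports Defs
begin

lemma bracket_lt:
  fixes g nn et x y :: real
  assumes "g > 0" "nn > 0" "0 < x" "0 < y" "x < hstar g nn et" "y < hstar g nn et"
  shows "g * nn * (x^2 + x*y + y^2) < et * (x + y)"
proof -
  have gn: "g*nn > 0" using assms by simp
  have hx: "g*nn*x < 2*et/3" using assms(5) gn unfolding hstar_def
    by (simp add: field_simps)
  have hy: "g*nn*y < 2*et/3" using assms(6) gn unfolding hstar_def
    by (simp add: field_simps)
  have a1: "g*nn*(x + y/2) < et" using hx hy by (simp add: distrib_left)
  have b1: "g*nn*(y + x/2) < et" using hx hy by (simp add: distrib_left)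
  have a: "x * (g*nn*(x + y/2)) < x * et"
    by (rule mult_strict_left_mono[OF a1 assms(3)])
  have b: "y * (g*nn*(y + x/2)) < y * et"
    by (rule mult_strict_left_mono[OF b1 assms(4)])
  have "g * nn * (x^2 + x*y + y^2) = x * (g*nn*(x + y/2)) + y * (g*nn*(y + x/2))"
    by (simp add: algebra_simps power2_eq_square)
  also have "\<dots> < x*et + y*et" using a b by simp
  finally show ?thesis by (simp add: algebra_simps)
qed

lemma Pdiff:
  "Pcubic g nn et q r x - Pcubic g nn et q r y = (x - y) * (g*nn*(x^2+x*y+y^2) - et*(x+y))"
  unfolding Pcubic_def by (simp add: algebra_simps power2_eq_square power3_eq_cube)

lemma root_props:
  fixes g nn et q r :: real
  assumes g: "g > 0" and nn: "nn > 0" and et: "et > 0" and q: "q \<noteq> 0" and r: "r \<noteq> 0"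
    and neg: "Pcubic g nn et q r (hstar g nn et) < 0"
  shows "0 < hroot g nn et q r \<and> hroot g nn et q r < hstar g nn et
         \<and> Pcubic g nn et q r (hroot g nn et q r) = 0"
proof -
  let ?P = "Pcubic g nn et q r"
  let ?h = "hstar g nn et"
  have hpos: "?h > 0" using g nn et unfolding hstar_def by simp
  have P0: "?P 0 > 0" using q r unfolding Pcubic_def by simp
  have cont: "\<forall>x. 0 \<le> x \<and> x \<le> ?h \<longrightarrow> isCont ?P x"
    unfolding Pcubic_def by (auto intro!: continuous_intros)
  have "\<exists>x. 0 \<le> x \<and> x \<le> ?h \<and> ?P x = 0"
    by (rule IVT2[of ?P ?h 0 0, OF less_imp_le[OF neg] less_imp_le[OF P0] less_imp_le[OF hpos] cont])
  then obtain x where x: "0 \<le> x" "x \<le> ?h" "?P x = 0" by blast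
  have x0: "x \<noteq> 0" using x(3) P0 by force
  have xh: "x \<noteq> ?h" using x(3) neg by force
  have ex: "0 < x \<and> x < ?h \<and> ?P x = 0" using x x0 xh by linarith
  have uniq: "y = x" if "0 < y \<and> y < ?h \<and> ?P y = 0" for y
  proof (rule ccontr)
    assume ne: "y \<noteq> x"
    have "?P y - ?P x = 0" using that ex by simp
    hence "(y - x) * (g*nn*(y^2+y*x+x^2) - et*(y+x)) = 0" by (simp add: Pdiff)
    hence "g*nn*(y^2+y*x+x^2) - et*(y+x) = 0" using ne by simp
    moreover have "g*nn*(y^2+y*x+x^2) < et*(y+x)"
      using bracket_lt[OF g nn, of y x et] that ex by blast
    ultimately show False by simp
  qed
  have "hroot g nn et q r = x"
    unfolding hroot_def using ex uniq by (rule the_equality)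
  thus ?thesis using ex by simp
qed


lemma final_alg:
  fixes g n et c hs he hq :: real
  assumes g: "g > 0" and n: "0 < n" "n \<le> 1" and et: "et > 0" and c: "c > 0"
    and s: "0 < hs" "hs < hstar g 1 et" and e: "0 < he" "he < hstar g n et"
    and ps: "g*hs^3 - et*hs^2 + c = 0" and pe: "g*n*he^3 - et*he^2 + c = 0"
    and hq: "0 \<le> hq" "et*hq^2 = c"
  shows "1 / (3 * n * (2 * et / (3 * g * n) - hq)) > 0 \<and>
         hs - he \<ge> 1 / (3 * n * (2 * et / (3 * g * n) - hq)) * hs^2 * (1 - n)"
proof -
  have gn: "g*n > 0" using g n by simp
  have "et*he^2 = c + g*n*he^3" using pe by simp
  moreover have "g*n*he^3 > 0" using gn e by simp
  ultimately have "et*hq^2 < et*he^2" using hq by simp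
  hence "hq^2 < he^2" using et by simp
  hence hqe: "hq < he" using e(1) hq(1) by (meson power_less_imp_less_base less_imp_le)
  have "hstar g 1 et \<le> hstar g n et" unfolding hstar_def using g n et
    by (simp add: frac_le)
  hence s2: "hs < hstar g n et" using s by simp
  define D where "D = et*(he+hs) - g*n*(he^2+he*hs+hs^2)"
  have Dpos: "D > 0" using bracket_lt[OF g n(1) e(1) s(1) e(2) s2] unfolding D_def by simp
  have "(hs-he)*D = (et*hs^2 - g*n*hs^3) - (et*he^2 - g*n*he^3)"
    unfolding D_def by (simp add: algebra_simps power2_eq_square power3_eq_cube)
  also have "\<dots> = g*(1-n)*hs^3" using ps pe by (simp add: algebra_simps)
  finally have id: "(hs-he)*D = g*(1-n)*hs^3" .
  have "g*(1-n)*hs^3 \<ge> 0" using g n s by simp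
  hence "(hs-he)*D \<ge> 0" using id by simp
  hence se: "hs - he \<ge> 0" using Dpos by (simp add: zero_le_mult_iff)
  have "hq*hs \<le> he*hs" using hqe s by simp
  hence "he^2+he*hs+hs^2-3*hq*hs \<ge> (hs-he)^2" by (simp add: power2_eq_square algebra_simps)
  moreover have "(hs-he)^2 \<ge> 0" by simp
  ultimately have "he^2+he*hs+hs^2-3*hq*hs \<ge> 0" by linarith
  hence "g*n*(he^2+he*hs+hs^2-3*hq*hs) \<ge> 0" using gn by simp
  moreover have "et*(hs-he) \<ge> 0" using et se by simp
  ultimately have "hs*(2*et - 3*g*n*hq) - D \<ge> 0"
    unfolding D_def by (simp add: algebra_simps power2_eq_square)
  hence Dle: "D \<le> hs*(2*et - 3*g*n*hq)" by simp
  have "g*(1-n)*hs^3 \<le> (hs-he)*(hs*(2*et - 3*g*n*hq))"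
    using id mult_left_mono[OF Dle se] by simp
  hence "hs * (g*(1-n)*hs^2) \<le> hs * ((hs-he)*(2*et - 3*g*n*hq))"
    by (simp add: algebra_simps power2_eq_square power3_eq_cube)
  hence key: "g*(1-n)*hs^2 \<le> (hs-he)*(2*et - 3*g*n*hq)" using s(1) by simp
  have "he < 2*et/(3*g*n)" using e unfolding hstar_def by simp
  hence "g*n*he < 2*et/3" using gn by (simp add: field_simps)
  moreover have "g*n*hq < g*n*he" using mult_strict_left_mono[OF hqe gn] .
  ultimately have denpos: "2*et - 3*g*n*hq > 0" by simp
  have Leq: "1 / (3 * n * (2 * et / (3 * g * n) - hq)) = g / (2*et - 3*g*n*hq)"
  proof -
    have "3*n*(2*et/(3*g*n) - hq) = (2*et - 3*g*n*hq)/g" using g n by (simp add: field_simps)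
    thus ?thesis by simp
  qed
  show ?thesis
  proof
    show "1 / (3 * n * (2 * et / (3 * g * n) - hq)) > 0" using Leq denpos g by simp
    have "g / (2*et - 3*g*n*hq) * hs^2 * (1-n) = (g*(1-n)*hs^2) / (2*et - 3*g*n*hq)"
      by simp
    also have "\<dots> \<le> hs - he" using key denpos by (simp add: pos_divide_le_eq)
    finally show "hs - he \<ge> 1 / (3 * n * (2 * et / (3 * g * n) - hq)) * hs^2 * (1 - n)"
      using Leq by simp
  qed
qed


lemma Pstar_neg:
  fixes g n et q r :: real
  assumes g: "g > 0" and n: "0 < n" "n \<le> 1" and et: "et > 0"
    and key: "27*g^2*(q^2/(2*r^2)) < 4*et^3"
  shows "Pcubic g n et q r (hstar g n et) < 0"
proof -
  define h where "h = hstar g n et"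
  define c where "c = q^2/(2*r^2)"
  have gnh: "g*n*h = 2*et/3" using g n unfolding h_def hstar_def by (simp add: field_simps)
  have P: "Pcubic g n et q r h = c - et*h^2/3"
    unfolding Pcubic_def c_def using gnh
    by (simp add: power3_eq_cube power2_eq_square algebra_simps)
  have h0: "2*et/(3*g) \<le> h" using g n et unfolding h_def hstar_def
    by (simp add: frac_le)
  have "0 \<le> 2*et/(3*g)" using g et by simp
  hence "(2*et/(3*g))^2 \<le> h^2" using h0 by (simp add: power_mono)
  hence "et*(2*et/(3*g))^2 \<le> et*h^2" using et by simp
  moreover have "et*(2*et/(3*g))^2 = 4*et^3/(9*g^2)" by (simp add: power2_eq_square power3_eq_cube field_simps)
  moreover have "c < 4*et^3/(27*g^2)" using key g unfolding c_def by (simp add: field_simps)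
  ultimately have "c < et*h^2/3" by simp
  thus ?thesis using P unfolding h_def by simp
qed

lemma cubic_key:
  fixes a b :: real
  assumes "b > 0" "a > b"
  shows "27*a*b^2 < (a+2*b)^3"
proof -
  have "(a+2*b)^3 - 27*a*b^2 = (a-b)^2*(a+8*b)" by (simp add: algebra_simps power2_eq_square power3_eq_cube)
  moreover have "(a-b)^2*(a+8*b) > 0" using assms by simp
  ultimately show ?thesis by simp
qed

theorem proposition1:
  fixes g r0 r1 h0 u0 :: real and f f' :: "real \<Rightarrow> real"
  assumes g_pos: "g > 0"
    and r0_pos: "0 < r0" and r01: "r0 < r1"
    and f_deriv: "\<And>r. r \<in> {r0..r1} \<Longrightarrow> (f has_real_derivative f' r) (at r within {r0..r1})"
    and f'_cont: "continuous_on {r0..r1} f'"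
    and f'_nonpos: "\<And>r. r \<in> {r0..r1} \<Longrightarrow> f' r \<le> 0"
    and f'_r0: "f' r0 = 0"
    and f_drop: "f r0 > f r1"
    and h0_pos: "h0 > 0" and u0_pos: "u0 > 0"
    and supercrit: "u0^2 / (g * h0) > 1"
    and r: "r \<in> {r0..r1}"
  shows "Lc g f f' r0 h0 u0 r > 0 \<and>
         hS g f r0 h0 u0 r - hE g f f' r0 h0 u0 r
           \<ge> Lc g f f' r0 h0 u0 r * (hS g f r0 h0 u0 r)^2 * (1 - nu f' r)"
proof -
  define n where "n = nu f' r"
  define et where "et = eta g f r0 h0 u0 r"
  define q where "q = qw r0 h0 u0"
  define c where "c = q^2/(2*r^2)"
  have sq1: "1 \<le> sqrt (1 + (f' r)^2)" by simp
  have npos: "n > 0" unfolding n_def nu_def by (simp add: add_pos_nonneg)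
  have nle: "n \<le> 1" unfolding n_def nu_def using sq1 add_pos_nonneg[of 1 "(f' r)^2"] by (simp add: divide_le_eq)
  have rr: "r0 \<le> r" "r \<le> r1" using r by auto
  have rpos: "r > 0" using rr r0_pos by simp
  have fr: "f r \<le> f r0"
  proof (cases "r = r0")
    case True thus ?thesis by simp
  next
    case False
    hence lt: "r0 < r" using rr by simp
    have "\<exists>x\<in>{r0<..<r}. f r - f r0 = (\<lambda>h. f' x * h) (r - r0)"
    proof (rule mvt_simple[OF lt])
      fix x assume x: "r0 \<le> x" "x \<le> r"
      have "(f has_real_derivative f' x) (at x within {r0..r1})" using x rr by (intro f_deriv) auto
      hence "(f has_derivative (\<lambda>h. f' x * h)) (at x within {r0..r1})"
        by (simp add: has_field_derivative_imp_has_derivative)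
      thus "(f has_derivative (\<lambda>h. f' x * h)) (at x within {r0..r})"
        by (rule has_derivative_subset) (use rr in auto)
    qed
    then obtain x where x: "x \<in> {r0<..<r}" "f r - f r0 = f' x * (r - r0)" by auto
    have "f' x \<le> 0" using x rr by (intro f'_nonpos) auto
    hence "f' x * (r - r0) \<le> 0" using lt by (simp add: mult_nonpos_nonneg)
    thus ?thesis using x by simp
  qed
  define et0 where "et0 = u0^2/2 + g*h0"
  have et_ge: "et0 \<le> et" unfolding et0_def et_def eta_def qe_def using fr g_pos
    by (simp add: algebra_simps)
  have et0pos: "et0 > 0" unfolding et0_def using g_pos h0_pos u0_pos by (intro add_pos_pos) auto
  have etpos: "et > 0" using et_ge et0pos by simp
  have qpos: "q > 0" unfolding q_def qw_def using r0_pos h0_pos u0_pos by simp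
  have ab: "u0^2 > g*h0" using supercrit g_pos h0_pos by (simp add: field_simps)
  have "r0^2 \<le> r^2" using rr r0_pos by (simp add: power_mono)
  hence "q^2/(2*r^2) \<le> q^2/(2*r0^2)" using r0_pos by (simp add: frac_le)
  also have "q^2/(2*r0^2) = h0^2*u0^2/2" unfolding q_def qw_def using r0_pos
    by (simp add: power_mult_distrib field_simps)
  finally have cle: "c \<le> h0^2*u0^2/2" unfolding c_def .
  have "27*g^2*c \<le> 27*g^2*(h0^2*u0^2/2)" using mult_left_mono[OF cle, of "27*g^2"] by simp
  also have "27*g^2*(h0^2*u0^2/2) = 27*u0^2*(g*h0)^2/2" by (simp add: power_mult_distrib)
  also have "\<dots> < (u0^2 + 2*(g*h0))^3/2" using cubic_key[of "g*h0" "u0^2"] ab g_pos h0_pos by simp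
  also have "(u0^2 + 2*(g*h0))^3/2 = 4*et0^3" unfolding et0_def by (simp add: power3_eq_cube algebra_simps)
  also have "4*et0^3 \<le> 4*et^3" using et_ge et0pos by (simp add: power_mono)
  finally have key: "27*g^2*(q^2/(2*r^2)) < 4*et^3" unfolding c_def .
  have rS: "0 < hroot g 1 et q r \<and> hroot g 1 et q r < hstar g 1 et
         \<and> Pcubic g 1 et q r (hroot g 1 et q r) = 0"
    using root_props[OF g_pos _ etpos _ _ Pstar_neg[OF g_pos _ _ etpos key]] qpos rpos by simp
  have rE: "0 < hroot g n et q r \<and> hroot g n et q r < hstar g n et
         \<and> Pcubic g n et q r (hroot g n et q r) = 0"
    using root_props[OF g_pos npos etpos _ _ Pstar_neg[OF g_pos npos nle etpos key]] qpos rpos by simp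
  define hs where "hs = hroot g 1 et q r"
  define he where "he = hroot g n et q r"
  define hq where "hq = q / (r * sqrt (2 * et))"
  have hq0: "0 \<le> hq" unfolding hq_def using qpos rpos etpos by simp
  have "hq^2 = q^2/(r^2 * 2 * et)" unfolding hq_def using etpos
    by (simp add: power_divide power_mult_distrib)
  hence hq2: "et*hq^2 = c" unfolding c_def using etpos by (simp add: field_simps)
  have cpos: "c > 0" unfolding c_def using qpos rpos by simp
  have ps: "g*hs^3 - et*hs^2 + c = 0" using rS unfolding hs_def Pcubic_def c_def by simp
  have pe: "g*n*he^3 - et*he^2 + c = 0" using rE unfolding he_def Pcubic_def c_def by simp
  have res: "1 / (3 * n * (2 * et / (3 * g * n) - hq)) > 0 \<and>
         hs - he \<ge> 1 / (3 * n * (2 * et / (3 * g * n) - hq)) * hs^2 * (1 - n)"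
    using final_alg[OF g_pos npos nle etpos cpos _ _ _ _ ps pe hq0 hq2] rS rE
    unfolding hs_def he_def by blast
  have "Lc g f f' r0 h0 u0 r = 1 / (3 * n * (2 * et / (3 * g * n) - hq))"
    unfolding Lc_def hQ_def n_def et_def hq_def q_def by simp
  moreover have "hS g f r0 h0 u0 r = hs" unfolding hS_def hs_def et_def q_def by simp
  moreover have "hE g f f' r0 h0 u0 r = he" unfolding hE_def he_def et_def q_def n_def by simp
  ultimately show ?thesis using res unfolding n_def by simp
qed

end
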